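(* Let $r>0$, $\delta>0$, $R:=r/\delta$, and suppose $R+\tfrac12\in\mathbb{Z}$. Then for every unit-norm tight frame $\mathcal{F}$ of $\mathbb{R}^2$, $$\mathcal{E}_\delta(r,\mathcal{F})\ge \frac{32}{3\pi^{5/2}}\,\frac{\delta^{3/2}}{\sqrt r}.$$
   Context: A finite family $\mathcal{F}=\{e_j\}_{j=1}^N\subset\mathbb{R}^2$ is a unit-norm tight frame if $\|e_j\|=1$ for all $j$ and $\sum_j e_je_j^T=\frac{N}{2}I_2$. For $\delta>0$, $Q_\delta(t):=\delta\lfloor t/\delta+1/2\rfloor$, and $E_\delta(x,\mathcal{F}):=\bigl\|x-\frac{2}{N}\sum_{j=1}^N Q_\delta(\langle x,e_j\rangle)e_j\bigr\|$ (Euclidean norm). For $r>0$ set $x_\psi:=r[\cos\psi,\sin\psi]^T$ and $$\mathcal{E}_\delta(r,\mathcal{F}):=\Bigl(\int_0^{2\pi}E_\delta(x_\psi,\mathcal{F})^2\,d\psi\Bigr)^{1/2}.$$ *)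

theory Defs
  imports "HOL-Analysis.Analysis"
begin

definition untf :: "nat \<Rightarrow> (nat \<Rightarrow> real^2) \<Rightarrow> bool" where
  "untf N e \<longleftrightarrow> 0 < N \<and> (\<forall>j\<in>{1..N}. norm (e j) = 1) \<and>
     (\<Sum>j\<in>{1..N}. (\<chi> a b. e j $ a * e j $ b)) = mat (real N / 2)"

definition Qd :: "real \<Rightarrow> real \<Rightarrow> real" where
  "Qd \<delta> t = \<delta> * of_int \<lfloor>t / \<delta> + 1/2\<rfloor>"

definition Ed :: "real \<Rightarrow> real^2 \<Rightarrow> nat \<Rightarrow> (nat \<Rightarrow> real^2) \<Rightarrow> real" where
  "Ed \<delta> x N e = norm (x - (2 / real N) *\<^sub>R (\<Sum>j\<in>{1..N}. Qd \<delta> (x \<bullet> e j) *\<^sub>R e j))"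

definition xpsi :: "real \<Rightarrow> real \<Rightarrow> real^2" where
  "xpsi r \<psi> = vector [r * cos \<psi>, r * sin \<psi>]"

definition MSE :: "real \<Rightarrow> real \<Rightarrow> nat \<Rightarrow> (nat \<Rightarrow> real^2) \<Rightarrow> real" where
  "MSE \<delta> r N e = sqrt (integral {0..2*pi} (\<lambda>\<psi>. (Ed \<delta> (xpsi r \<psi>) N e)^2))"

end

theory Submission
  imports Defs
begin


lemma periodic_shift:
  fixes f :: "real \<Rightarrow> real"
  assumes per: "\<And>x. f (x + 2*pi) = f x" and int: "(f has_integral J) {0..2*pi}"
    and th: "0 \<le> \<theta>" "\<theta> \<le> 2*pi"
  shows "((\<lambda>x. f (x - \<theta>)) has_integral J) {0..2*pi}"
proof -
  have fi: "f integrable_on {0..2*pi}" using int by blast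
  define A where "A = integral {0..2*pi-\<theta>} f"
  define B where "B = integral {2*pi-\<theta>..2*pi} f"
  have A: "(f has_integral A) {0..2*pi-\<theta>}" unfolding A_def
    using integrable_subinterval_real[OF fi] th by (intro integrable_integral) auto
  have B: "(f has_integral B) {2*pi-\<theta>..2*pi}" unfolding B_def
    using integrable_subinterval_real[OF fi] th by (intro integrable_integral) auto
  have "(f has_integral A + B) {0..2*pi}"
    using has_integral_combine[OF _ _ A B] th by auto
  hence AB: "A + B = J" using int has_integral_unique by blast
  have "((f \<circ> (+) (2*pi)) has_integral B) {-\<theta>..0}"
    using B by (subst has_integral_shift_Icc_real) (simp add: add.commute)
  moreover have "f \<circ> (+) (2*pi) = f" using per by (auto simp: fun_eq_iff add.commute)
  ultimately have B': "(f has_integral B) {-\<theta>..0}" by simp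
  have "(f has_integral B + A) {-\<theta>..2*pi-\<theta>}"
    using has_integral_combine[OF _ _ B' A] th by auto
  hence "((f \<circ> (+) (-\<theta>)) has_integral J) {0..2*pi}"
    using AB by (subst has_integral_shift_Icc_real) (simp add: add.commute)
  thus ?thesis by (simp add: o_def)
qed



lemma int_interval_cos:
  assumes ab: "0 \<le> a" "a \<le> b" "b \<le> 2*pi"
    and f1: "\<And>\<psi>. \<psi> \<in> {0..2*pi} \<Longrightarrow> a < \<psi> \<Longrightarrow> \<psi> < b \<Longrightarrow> f \<psi> = cos \<psi>"
    and f2: "\<And>\<psi>. \<psi> \<in> {0..2*pi} \<Longrightarrow> \<psi> < a \<or> b < \<psi> \<Longrightarrow> f \<psi> = 0"
  shows "(f has_integral (sin b - sin a)) {0..2*pi}"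
proof -
  have "(cos has_integral (sin b - sin a)) {a..b}"
    using ab(2) by (intro fundamental_theorem_of_calculus)
      (auto intro!: derivative_eq_intros simp: has_real_derivative_iff_has_vector_derivative[symmetric])
  hence "((\<lambda>x. if x \<in> cbox a b then cos x else 0) has_integral (sin b - sin a)) (cbox 0 (2*pi))"
    using ab by (intro has_integral_restrict_closed_subinterval) auto
  hence h: "((\<lambda>x. if x \<in> {a..b} then cos x else 0) has_integral (sin b - sin a)) {0..2*pi}" by simp
  show ?thesis
  proof (rule has_integral_spike_finite[OF _ _ h, of "{a,b}"])
    fix x assume x: "x \<in> {0..2*pi} - {a,b}"
    show "f x = (if x \<in> {a..b} then cos x else 0)"
    proof (cases "x < a \<or> b < x")
      case True thus ?thesis using f2[of x] x by auto
    next
      case False thus ?thesis using f1[of x] x by auto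
    qed
  qed simp
qed

lemma cos_lt_iff:
  assumes c: "-1 \<le> c" "c \<le> 1" and psi: "\<psi> \<in> {0..2*pi}"
  shows "cos \<psi> < c \<longleftrightarrow> arccos c < \<psi> \<and> \<psi> < 2*pi - arccos c"
proof -
  obtain b where bd: "b = arccos c" by blast
  have b: "0 \<le> b" "b \<le> pi" "cos b = c" using arccos_bounded[OF c] c by (auto simp: bd)
  have p: "0 \<le> \<psi>" "\<psi> \<le> 2*pi" using psi by auto
  have "cos \<psi> < c \<longleftrightarrow> b < \<psi> \<and> \<psi> < 2*pi - b"
  proof (cases "\<psi> \<le> pi")
    case True
    hence "cos \<psi> < cos b \<longleftrightarrow> b < \<psi>" using p b cos_mono_less_eq[of \<psi> b] by linarith
    moreover have "b < \<psi> \<Longrightarrow> \<psi> < 2*pi - b" using True b by linarith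
    ultimately show ?thesis unfolding b(3)[symmetric] by blast
  next
    case False
    have e: "cos \<psi> = cos (2*pi - \<psi>)" by (simp add: cos_diff)
    have "cos (2*pi - \<psi>) < cos b \<longleftrightarrow> b < 2*pi - \<psi>" using p b False cos_mono_less_eq[of "2*pi - \<psi>" b] by linarith
    moreover have "b < 2*pi - \<psi> \<Longrightarrow> b < \<psi>" using False b by linarith
    moreover have "\<psi> < 2*pi - b \<longleftrightarrow> b < 2*pi - \<psi>" by linarith
    ultimately show ?thesis unfolding b(3)[symmetric] e by blast
  qed
  thus ?thesis using bd by simp
qed

lemma int_ind_lt:
  assumes c: "-1 \<le> c" "c \<le> 1"
  shows "((\<lambda>\<psi>. if cos \<psi> < c then cos \<psi> else 0) has_integral (-2* sqrt(1-c^2))) {0..2*pi}"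
proof -
  define b where "b = arccos c"
  have b: "0 \<le> b" "b \<le> pi" "cos b = c" using arccos_bounded[OF c] c by (auto simp: b_def)
  have sb: "sin b = sqrt (1 - c^2)" unfolding b_def using sin_arccos c by simp
  have "((\<lambda>\<psi>. if cos \<psi> < c then cos \<psi> else 0) has_integral (sin (2*pi-b) - sin b)) {0..2*pi}"
  proof (rule int_interval_cos)
    fix \<psi> assume p: "\<psi> \<in> {0..2*pi}" "b < \<psi>" "\<psi> < 2*pi - b"
    hence "cos \<psi> < c" using cos_lt_iff[OF c p(1)] unfolding b_def by blast
    thus "(if cos \<psi> < c then cos \<psi> else 0) = cos \<psi>" by simp
  next
    fix \<psi> assume p: "\<psi> \<in> {0..2*pi}" "\<psi> < b \<or> 2*pi - b < \<psi>"
    hence "\<not> cos \<psi> < c" using cos_lt_iff[OF c p(1)] unfolding b_def by auto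
    thus "(if cos \<psi> < c then cos \<psi> else 0) = 0" by simp
  qed (use b in auto)
  moreover have "sin (2*pi-b) - sin b = -2* sqrt(1-c^2)" using sb by (simp add: sin_diff)
  ultimately show ?thesis by simp
qed

lemma int_cos: "(cos has_integral 0) {0..2*pi}"
proof -
  have "(cos has_integral (sin (2*pi) - sin 0)) {0..2*pi}"
    by (intro fundamental_theorem_of_calculus)
      (auto intro!: derivative_eq_intros simp: has_real_derivative_iff_has_vector_derivative[symmetric])
  thus ?thesis by simp
qed

lemma int_ind_ge:
  assumes c: "-1 \<le> c" "c \<le> 1"
  shows "((\<lambda>\<psi>. if cos \<psi> \<ge> c then cos \<psi> else 0) has_integral (2 * sqrt(1-c^2))) {0..2*pi}"
proof -
  have "((\<lambda>\<psi>. cos \<psi> - (if cos \<psi> < c then cos \<psi> else 0)) has_integral (0 - (-2 * sqrt(1-c^2)))) {0..2*pi}"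
    by (intro has_integral_diff int_cos int_ind_lt c)
  moreover have "(\<lambda>\<psi>. cos \<psi> - (if cos \<psi> < c then cos \<psi> else 0)) = (\<lambda>\<psi>. if cos \<psi> \<ge> c then cos \<psi> else 0)"
    by (auto simp: fun_eq_iff)
  ultimately show ?thesis by simp
qed

lemma int_cos2: "((\<lambda>\<psi>. (cos \<psi>)^2) has_integral pi) {0..2*pi}"
proof -
  have d: "((\<lambda>x. x/2 + sin (2*x)/4) has_real_derivative (cos x)^2) (at x)" for x
  proof -
    have "((\<lambda>x. x/2 + sin (2*x)/4) has_real_derivative (1/2 + cos (2*x)/2)) (at x)"
      by (auto intro!: derivative_eq_intros)
    moreover have "1/2 + cos (2*x)/2 = (cos x)^2" using cos_double_cos[of x] by (simp add: field_simps)
    ultimately show ?thesis by metis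
  qed
  have "((\<lambda>\<psi>. (cos \<psi>)^2) has_integral ((\<lambda>x. x/2 + sin (2*x)/4) (2*pi) - (\<lambda>x. x/2 + sin (2*x)/4) 0)) {0..2*pi}"
    apply (intro fundamental_theorem_of_calculus)
     apply simp
    using d by (simp add: has_real_derivative_iff_has_vector_derivative[symmetric] has_field_derivative_at_within)
  thus ?thesis by simp
qed



lemma clamp_sum:
  "(\<Sum>m=1..k. (if int m \<le> n then 1 else 0) - (if n \<le> - int m then 1 else 0) :: int)
     = max (- int k) (min (int k) n)"
proof (induction k)
  case 0 thus ?case by simp
next
  case (Suc k)
  show ?case unfolding sum.cl_ivl_Suc Suc by auto
qed

lemma floor_sum:
  fixes y :: real and k :: nat
  assumes "-(real k + 1/2) \<le> y" "y < real k + 1/2"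
  shows "real_of_int \<lfloor>y + 1/2\<rfloor> =
    (\<Sum>m=1..k. (if y \<ge> real m - 1/2 then 1 else 0) - (if y < -(real m - 1/2) then 1 else 0))"
proof -
  define n where "n = \<lfloor>y + 1/2\<rfloor>"
  have nb: "- int k \<le> n" "n \<le> int k" using assms unfolding n_def by (auto simp: le_floor_iff floor_le_iff)
  have e1: "y \<ge> real m - 1/2 \<longleftrightarrow> int m \<le> n" for m :: nat
    unfolding n_def le_floor_iff by auto
  have e2: "y < 1/2 - real m \<longleftrightarrow> n \<le> - int m" for m :: nat
  proof -
    have "n \<le> - int m \<longleftrightarrow> n < 1 - int m" by auto
    also have "\<dots> \<longleftrightarrow> y + 1/2 < real_of_int (1 - int m)" unfolding n_def floor_less_iff by simp
    finally show ?thesis by auto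
  qed
  have "(\<Sum>m=1..k. (if y \<ge> real m - 1/2 then 1 else 0) - (if y < -(real m - 1/2) then 1 else 0) :: real)
      = real_of_int (\<Sum>m=1..k. (if int m \<le> n then 1 else 0) - (if n \<le> - int m then 1 else 0) :: int)"
    unfolding of_int_sum by (intro sum.cong refl) (simp add: e1 e2)
  also have "\<dots> = real_of_int n" unfolding clamp_sum using nb by simp
  finally show ?thesis unfolding n_def by simp
qed

lemma cos_lt_1:
  assumes "\<psi> \<in> {0..2*pi} - {0, 2*pi}" shows "cos \<psi> < 1"
proof -
  have "0 < \<psi>" "\<psi> < 2*pi" using assms by auto
  thus ?thesis using cos_lt_iff[of 1 \<psi>] assms by simp
qed

definition Gf :: "real \<Rightarrow> real \<Rightarrow> real" where "Gf \<delta> t = (t - Qd \<delta> t) * t"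

lemma J_formula:
  assumes d: "\<delta> > 0" and r: "r = (real k + 1/2) * \<delta>"
  shows "((\<lambda>\<psi>. Gf \<delta> (r * cos \<psi>)) has_integral
     (pi * r^2 - 4*\<delta>*r * (\<Sum>m=1..k. sqrt(1 - ((real m - 1/2)/(real k + 1/2))^2)))) {0..2*pi}"
proof -
  define R where "R = real k + 1/2"
  define c where "c m = (real m - 1/2)/R" for m :: nat
  have R: "R > 0" unfolding R_def by simp
  have cb: "-1 \<le> c m" "c m \<le> 1" "-1 \<le> - c m" "- c m \<le> 1" if "m \<in> {1..k}" for m
  proof -
    have "0 \<le> c m" "c m \<le> 1" using that R unfolding c_def R_def by (auto simp: field_simps)
    thus "-1 \<le> c m" "c m \<le> 1" "-1 \<le> - c m" "- c m \<le> 1" by auto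
  qed
  define F where "F \<psi> = r^2 * (cos \<psi>)^2 - \<delta> * r * (\<Sum>m=1..k.
      (if cos \<psi> \<ge> c m then cos \<psi> else 0) - (if cos \<psi> < - c m then cos \<psi> else 0))" for \<psi>
  define S where "S = (\<Sum>m=1..k. sqrt(1 - ((real m - 1/2)/(real k + 1/2))^2))"
  have FI0: "(F has_integral (r^2 * pi - \<delta> * r * (\<Sum>m=1..k. 2 * sqrt(1 - (c m)^2) - (-2 * sqrt(1 - (- c m)^2))))) {0..2*pi}"
    unfolding F_def
    by (intro has_integral_diff has_integral_mult_right has_integral_sum finite_atLeastAtMost
        int_cos2 int_ind_ge int_ind_lt cb) auto
  have eq: "(\<Sum>m=1..k. 2 * sqrt(1 - (c m)^2) - (-2 * sqrt(1 - (- c m)^2))) = 4 * S"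
    unfolding S_def c_def R_def sum_distrib_left by (intro sum.cong refl) simp
  have eq2: "r^2 * pi - \<delta> * r * (4 * S) = pi * r^2 - 4*\<delta>*r * S" by (simp add: algebra_simps)
  have FI: "(F has_integral (pi * r^2 - 4*\<delta>*r * (\<Sum>m=1..k. sqrt(1 - ((real m - 1/2)/(real k + 1/2))^2)))) {0..2*pi}"
    using FI0 unfolding eq eq2 by (simp only: S_def)
  show ?thesis
  proof (rule has_integral_spike_finite[OF _ _ FI, of "{0, 2*pi}"])
    fix \<psi> assume p: "\<psi> \<in> {0..2*pi} - {0, 2*pi}"
    have c1: "cos \<psi> < 1" using cos_lt_1[OF p] .
    define y where "y = R * cos \<psi>"
    have y1: "-(real k + 1/2) \<le> y" "y < real k + 1/2"
    proof -
      have "R * (-1) \<le> R * cos \<psi>" using cos_ge_minus_one[of \<psi>] R by (intro mult_left_mono) auto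
      moreover have "R * cos \<psi> < R * 1" using c1 R by (intro mult_strict_left_mono) auto
      ultimately show "-(real k + 1/2) \<le> y" "y < real k + 1/2" unfolding y_def R_def by auto
    qed
    have q: "Qd \<delta> (r * cos \<psi>) = \<delta> * real_of_int \<lfloor>y + 1/2\<rfloor>"
      unfolding Qd_def y_def r R_def using d by simp
    have i1: "y \<ge> real m - 1/2 \<longleftrightarrow> cos \<psi> \<ge> c m" for m
      unfolding y_def c_def using R by (simp add: field_simps)
    have i2: "y < -(real m - 1/2) \<longleftrightarrow> cos \<psi> < - c m" for m
      unfolding y_def c_def using R by (simp add: field_simps)
    have qs: "Qd \<delta> (r * cos \<psi>) = \<delta> * (\<Sum>m=1..k. (if cos \<psi> \<ge> c m then 1 else 0) - (if cos \<psi> < - c m then 1 else 0))"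
      unfolding q floor_sum[OF y1] i1 i2 ..
    show "Gf \<delta> (r * cos \<psi>) = F \<psi>"
    proof -
      have se: "(\<Sum>m=1..k. (if cos \<psi> \<ge> c m then 1 else 0) - (if cos \<psi> < - c m then 1 else 0)) * cos \<psi>
        = (\<Sum>m=1..k. (if cos \<psi> \<ge> c m then cos \<psi> else 0) - (if cos \<psi> < - c m then cos \<psi> else 0))"
        unfolding sum_distrib_right by (intro sum.cong refl) auto
      show ?thesis unfolding Gf_def F_def qs se[symmetric] by (simp add: algebra_simps power2_eq_square)
    qed
  qed simp
qed



lemma sin_taylor5: fixes x :: real assumes "0 \<le> x" shows "sin x \<le> x - x^3/6 + x^5/120"
proof -
  have "\<bar>sin x - (\<Sum>m<5. sin_coeff m * x ^ m)\<bar> \<le> inverse (fact 5) * \<bar>x\<bar> ^ 5"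
    by (rule Maclaurin_sin_bound)
  moreover have "(\<Sum>m<5. sin_coeff m * x ^ m) = x - x^3/6"
  proof -
    have sc: "sin_coeff 0 = 0" "sin_coeff 1 = 1" "sin_coeff 2 = 0" "sin_coeff 3 = -1/6" "sin_coeff 4 = 0"
      by (simp_all add: sin_coeff_def fact_numeral)
    have "{..<5::nat} = {0,1,2,3,4}" by auto
    thus ?thesis using sc(2) by (simp add: sc)
  qed
  moreover have "inverse (fact 5) * \<bar>x\<bar> ^ 5 = x^5/120" using assms
    by (simp add: eval_nat_numeral field_simps)
  ultimately show ?thesis by linarith
qed

lemma one_minus_cos_le: "1 - cos x \<le> (x::real)^2/2"
proof -
  have "cos x = 1 - 2 * sin (x/2) ^ 2" using cos_double_sin[of "x/2"] by simp
  moreover have "sin (x/2) ^ 2 \<le> (x/2)^2"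
    using abs_sin_x_le_abs_x[of "x/2"] by (metis abs_ge_zero power2_abs power_mono)
  ultimately show ?thesis by (simp add: power_divide)
qed

lemma pi_ineq: "640 \<le> pi^2 * (80 - pi^2)"
proof -
  have p: "3.14 \<le> pi" "pi \<le> 3.15" using pi_approx by auto
  have "9.8 \<le> pi^2" using power_mono[OF p(1), of 2] by (simp add: power2_eq_square)
  moreover have "pi^2 \<le> 10" using power_mono[OF p(2), of 2] by (simp add: power2_eq_square)
  ultimately have "9.8 * 70 \<le> pi^2 * (80 - pi^2)" by (intro mult_mono) auto
  thus ?thesis by simp
qed

lemma g_lower: fixes x :: real
  assumes "0 \<le> x" "x \<le> pi/2"
  shows "4/(3*pi^2) * x^3 \<le> x - sin x"
proof -
  have "x^2 \<le> (pi/2)^2" using assms by (intro power_mono) auto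
  hence x2: "x^2 \<le> pi^2/4" by (simp add: power_divide)
  have "4/(3*pi^2) \<le> 1/6 - pi^2/480" using pi_ineq by (simp add: field_simps)
  also have "\<dots> \<le> 1/6 - x^2/120" using x2 by simp
  finally have "4/(3*pi^2) * x^3 \<le> (1/6 - x^2/120) * x^3" using assms by (intro mult_right_mono) auto
  also have "\<dots> = x^3/6 - x^5/120" by (simp add: field_simps eval_nat_numeral)
  also have "\<dots> \<le> x - sin x" using sin_taylor5[OF assms(1)] by linarith
  finally show ?thesis .
qed

lemma telesc_L:
  fixes s c :: "nat \<Rightarrow> real"
  assumes "\<And>m. c (Suc m) = c m + 1/R"
  shows "(\<Sum>m=1..n. s m * c (Suc m) - c m * s (Suc m))
       = (1/R) * (2 * (\<Sum>m=1..n. s m) - s 1 + s (Suc n)) + c 1 * s 1 - c (Suc n) * s (Suc n)"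
proof (induction n)
  case 0 thus ?case by (simp add: algebra_simps)
next
  case (Suc n)
  show ?case unfolding sum.cl_ivl_Suc Suc using assms[of "Suc n"] by (simp add: algebra_simps)
qed

lemma telesc_A:
  fixes a :: "nat \<Rightarrow> real"
  shows "(\<Sum>m=1..n. a m - a (Suc m)) = a 1 - a (Suc n)"
proof (induction n)
  case 0 thus ?case by simp
next
  case (Suc n)
  show ?case unfolding sum.cl_ivl_Suc Suc by simp
qed

lemma aux_lin: "(p::real) \<le> c \<Longrightarrow> X \<le> a + p - g \<Longrightarrow> c \<le> pi/2 - a \<Longrightarrow> 2*X \<le> pi - 2*g"
  by linarith

lemma aux_lin2: "(a::real) \<le> b \<Longrightarrow> b = 2*c \<Longrightarrow> 2*X \<le> pi - 2*g \<Longrightarrow> c \<le> g \<Longrightarrow> a \<le> pi - 2*X"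
  by linarith

lemma disc_bound:
  fixes k :: nat and R :: real
  assumes Rdef: "R = real k + 1/2"
  shows "(8/(3*pi^2)) * (2/R) * sqrt (2/R) \<le> pi - 4/R * (\<Sum>m=1..k. sqrt(1 - ((real m - 1/2)/R)^2))"
proof (cases "k = 0")
  case True
  hence R: "R = 1/2" using Rdef by simp
  have "64 \<le> 3 * pi^3"
  proof -
    have "3^3 \<le> pi^3" using pi_gt3 by (intro power_mono) auto
    thus ?thesis by simp
  qed
  hence "64/(3*pi^2) \<le> pi" by (simp add: field_simps power_def eval_nat_numeral)
  moreover have "2/R = 4" unfolding R by simp
  moreover hence "sqrt (2/R) = 2" by simp
  ultimately show ?thesis using True unfolding R by simp
next
  case False
  hence k1: "1 \<le> k" by simp
  have R0: "R > 0" "R \<ge> 3/2" using Rdef k1 by auto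
  define c where "c m = (real m - 1/2)/R" for m :: nat
  define \<alpha> where "\<alpha> m = arccos (c m)" for m
  define s where "s m = sin (\<alpha> m)" for m
  have cb: "0 \<le> c m" "c m \<le> 1" if "1 \<le> m" "m \<le> Suc k" for m
    using that R0 unfolding c_def Rdef by (auto simp: field_simps)
  have cS: "c (Suc m) = c m + 1/R" for m unfolding c_def using R0 by (simp add: field_simps)
  have cos\<alpha>: "cos (\<alpha> m) = c m" if "1 \<le> m" "m \<le> Suc k" for m
    unfolding \<alpha>_def using cb[OF that] by simp
  have sS: "s m = sqrt (1 - (c m)^2)" if "1 \<le> m" "m \<le> Suc k" for m
    unfolding s_def \<alpha>_def using cb[OF that] by (simp add: sin_arccos)
  have \<alpha>b: "0 \<le> \<alpha> m" "\<alpha> m \<le> pi/2" if "1 \<le> m" "m \<le> Suc k" for m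
    unfolding \<alpha>_def using cb[OF that] arccos_lbound[of "c m"] arccos_le_pi2[of "c m"] by auto
  have sb: "0 \<le> s m" "s m \<le> 1" if "1 \<le> m" "m \<le> Suc k" for m
    using sS[OF that] cb[OF that] by (auto simp: power_le_one)
  have cK: "c (Suc k) = 1" unfolding c_def Rdef by simp
  hence aK: "\<alpha> (Suc k) = 0" and sK: "s (Suc k) = 0" unfolding \<alpha>_def s_def by simp_all
  have Lle: "s m * c (Suc m) - c m * s (Suc m) \<le> \<alpha> m - \<alpha> (Suc m)" if "1 \<le> m" "m \<le> k" for m
  proof -
    have e: "s m * c (Suc m) - c m * s (Suc m) = sin (\<alpha> m - \<alpha> (Suc m))"
      unfolding sin_diff s_def using cos\<alpha>[of m] cos\<alpha>[of "Suc m"] that by simp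
    have "\<alpha> (Suc m) \<le> \<alpha> m" unfolding \<alpha>_def
      using cb[of m] cb[of "Suc m"] that cS[of m] R0 by (intro arccos_le_arccos) auto
    thus ?thesis unfolding e by (intro sin_x_le_x) simp
  qed
  have sumL: "(\<Sum>m=1..k. s m * c (Suc m) - c m * s (Suc m)) \<le> \<alpha> 1 - \<alpha> k + s k"
  proof -
    obtain j where j: "k = Suc j" using k1 by (cases k) auto
    have "(\<Sum>m=1..k. s m * c (Suc m) - c m * s (Suc m))
        = (\<Sum>m=1..j. s m * c (Suc m) - c m * s (Suc m)) + (s k * c (Suc k) - c k * s (Suc k))"
      unfolding j by (simp add: sum.cl_ivl_Suc)
    also have "\<dots> \<le> (\<Sum>m=1..j. \<alpha> m - \<alpha> (Suc m)) + s k"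
      using Lle j cK sK by (intro add_mono sum_mono) auto
    also have "\<dots> = \<alpha> 1 - \<alpha> k + s k" unfolding telesc_A j by simp
    finally show ?thesis .
  qed
  define S where "S = (\<Sum>m=1..k. s m)"
  have S_eq: "S = (\<Sum>m=1..k. sqrt(1 - ((real m - 1/2)/R)^2))"
    unfolding S_def using sS k1 by (intro sum.cong refl) (auto simp: c_def)
  have H: "(1/R) * (2 * S - s 1 + s (Suc k)) + c 1 * s 1 - c (Suc k) * s (Suc k) \<le> \<alpha> 1 - \<alpha> k + s k"
    using sumL unfolding telesc_L[of c R s k, OF cS] S_def .
  have c1v: "c 1 = 1/(2*R)" unfolding c_def by simp
  have H2: "(1/R) * (2 * S - s 1 + s (Suc k)) = (2/R) * S - 2 * (c 1 * s 1)"
    using sK R0 c1v by (simp add: field_simps)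
  have H3: "c (Suc k) * s (Suc k) = 0" using sK by simp
  have A: "(2/R) * S \<le> \<alpha> 1 + c 1 * s 1 - (\<alpha> k - sin (\<alpha> k))"
    using H H2 H3 unfolding s_def[of k] by linarith
  have c1: "c 1 \<le> pi/2 - \<alpha> 1"
  proof -
    have "c 1 = sin (pi/2 - \<alpha> 1)" using cos\<alpha>[of 1] k1 by (simp add: sin_cos_eq)
    also have "\<dots> \<le> pi/2 - \<alpha> 1" using \<alpha>b[of 1] k1 by (intro sin_x_le_x) auto
    finally show ?thesis .
  qed
  have "c 1 * s 1 \<le> c 1" using sb[of 1] cb[of 1] k1 by (simp add: mult_left_le)
  hence B: "2 * ((2/R) * S) \<le> pi - 2 * (\<alpha> k - sin (\<alpha> k))" using A c1 by (rule aux_lin)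
  have B4: "4/R * (\<Sum>m=1..k. sqrt(1 - ((real m - 1/2)/R)^2)) = 2 * ((2/R) * S)" unfolding S_eq by simp
  have G: "4/(3*pi^2) * (\<alpha> k)^3 \<le> \<alpha> k - sin (\<alpha> k)" using \<alpha>b[of k] k1 by (intro g_lower) auto
  have "1 - cos (\<alpha> k) = 1/R" using cos\<alpha>[of k] k1 R0 unfolding c_def Rdef by (simp add: field_simps)
  hence a2: "2/R \<le> (\<alpha> k)^2" using one_minus_cos_le[of "\<alpha> k"] by simp
  have a0: "0 \<le> \<alpha> k" using \<alpha>b[of k] k1 by auto
  have "sqrt (2/R) \<le> \<alpha> k" using a2 a0 by (metis real_sqrt_abs real_sqrt_le_mono abs_of_nonneg)
  hence "(2/R) * sqrt (2/R) \<le> (\<alpha> k)^2 * \<alpha> k" using a2 a0 R0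
    by (intro mult_mono) auto
  hence a3: "(2/R) * sqrt (2/R) \<le> (\<alpha> k)^3" by (simp add: power3_eq_cube power2_eq_square)
  have "(8/(3*pi^2)) * ((2/R) * sqrt (2/R)) \<le> (8/(3*pi^2)) * (\<alpha> k)^3"
    using a3 by (intro mult_left_mono) auto
  moreover have "(8/(3*pi^2)) * (\<alpha> k)^3 = 2 * (4/(3*pi^2) * (\<alpha> k)^3)" by simp
  ultimately have "(8/(3*pi^2)) * ((2/R) * sqrt (2/R)) \<le> pi - 4/R * (\<Sum>m=1..k. sqrt(1 - ((real m - 1/2)/R)^2))"
    unfolding B4 using B G by (rule aux_lin2)
  thus ?thesis by (simp add: mult.assoc)
qed



lemma xpsi_alt: "xpsi r \<psi> = (r * cos \<psi>) *\<^sub>R axis 1 1 + (r * sin \<psi>) *\<^sub>R axis 2 1"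
  unfolding xpsi_def by (simp add: vec_eq_iff forall_2 axis_def)

lemma meas_Ed: "(\<lambda>\<psi>. (Ed \<delta> (xpsi r \<psi>) N e)^2) \<in> borel_measurable (lebesgue_on S)"
proof -
  have "(\<lambda>\<psi>. (Ed \<delta> (xpsi r \<psi>) N e)^2) \<in> borel_measurable borel"
    unfolding Ed_def Qd_def xpsi_alt by measurable
  hence "(\<lambda>\<psi>. (Ed \<delta> (xpsi r \<psi>) N e)^2) \<in> borel_measurable lebesgue"
    by (intro measurable_completion) simp
  thus ?thesis by (rule measurable_restrict_space1)
qed

lemma frame_id:
  assumes u: "untf N e"
  shows "(\<Sum>j\<in>{1..N}. (x \<bullet> e j) *\<^sub>R e j) = (real N / 2) *\<^sub>R (x :: real^2)"
proof -
  have Mm: "(\<Sum>j\<in>{1..N}. (\<chi> a b. e j $ a * e j $ b)) = (mat (real N / 2) :: real^2^2)"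
    using u unfolding untf_def by blast
  have M: "(\<Sum>j\<in>{1..N}. e j $ b * e j $ a) = (if b = a then real N/2 else 0)" for a b
  proof -
    have "(\<Sum>j\<in>{1..N}. (\<chi> a b. e j $ a * e j $ b)) $ b $ a = (mat (real N / 2) :: real^2^2) $ b $ a"
      using Mm by simp
    thus ?thesis by (simp add: mat_def)
  qed
  show ?thesis
  proof (subst vec_eq_iff, intro allI)
    fix a :: 2
    have "(\<Sum>j\<in>{1..N}. (x \<bullet> e j) *\<^sub>R e j) $ a = (\<Sum>j\<in>{1..N}. (\<Sum>b\<in>UNIV. x $ b * e j $ b) * e j $ a)"
      by (simp add: inner_vec_def)
    also have "\<dots> = (\<Sum>b\<in>UNIV. x $ b * (\<Sum>j\<in>{1..N}. e j $ b * e j $ a))"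
      by (simp add: sum_distrib_left sum_distrib_right mult.assoc) (rule sum.swap)
    also have "\<dots> = (\<Sum>b\<in>UNIV. x $ b * (if b = a then real N/2 else 0))" by (simp only: M)
    also have "\<dots> = ((real N / 2) *\<^sub>R x) $ a" by (simp add: if_distrib cong: if_cong)
    finally show "(\<Sum>j\<in>{1..N}. (x \<bullet> e j) *\<^sub>R e j) $ a = ((real N / 2) *\<^sub>R x) $ a" .
  qed
qed

definition eta :: "real \<Rightarrow> real \<Rightarrow> real" where "eta \<delta> t = t - Qd \<delta> t"

lemma Ed_alt:
  assumes u: "untf N e"
  shows "Ed \<delta> x N e = norm ((2 / real N) *\<^sub>R (\<Sum>j\<in>{1..N}. eta \<delta> (x \<bullet> e j) *\<^sub>R e j))"
proof -
  have N: "N > 0" using u unfolding untf_def by simp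
  have "x = (2 / real N) *\<^sub>R (\<Sum>j\<in>{1..N}. (x \<bullet> e j) *\<^sub>R e j)"
    unfolding frame_id[OF u] using N by simp
  hence "x - (2 / real N) *\<^sub>R (\<Sum>j\<in>{1..N}. Qd \<delta> (x \<bullet> e j) *\<^sub>R e j)
     = (2 / real N) *\<^sub>R (\<Sum>j\<in>{1..N}. (x \<bullet> e j) *\<^sub>R e j) - (2 / real N) *\<^sub>R (\<Sum>j\<in>{1..N}. Qd \<delta> (x \<bullet> e j) *\<^sub>R e j)"
    by simp
  also have "\<dots> = (2 / real N) *\<^sub>R (\<Sum>j\<in>{1..N}. eta \<delta> (x \<bullet> e j) *\<^sub>R e j)"
    unfolding eta_def by (simp add: scaleR_diff_right scaleR_diff_left sum_subtractf)
  finally have eq: "x - (2 / real N) *\<^sub>R (\<Sum>j\<in>{1..N}. Qd \<delta> (x \<bullet> e j) *\<^sub>R e j)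
     = (2 / real N) *\<^sub>R (\<Sum>j\<in>{1..N}. eta \<delta> (x \<bullet> e j) *\<^sub>R e j)" .
  show ?thesis unfolding Ed_def eq by (rule refl)
qed

lemma eta_bound: assumes "\<delta> > 0" shows "\<bar>eta \<delta> t\<bar> \<le> \<delta>/2"
proof -
  define n where "n = \<lfloor>t/\<delta> + 1/2\<rfloor>"
  have "real_of_int n \<le> t/\<delta> + 1/2" "t/\<delta> + 1/2 < real_of_int n + 1" unfolding n_def by linarith+
  hence "\<delta> * real_of_int n \<le> t + \<delta>/2" "t + \<delta>/2 < \<delta> * real_of_int n + \<delta>" using assms
    by (simp_all add: field_simps)
  thus ?thesis unfolding eta_def Qd_def n_def[symmetric] by linarith
qed

lemma Ed_bound:
  assumes u: "untf N e" and d: "\<delta> > 0"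
  shows "Ed \<delta> x N e \<le> \<delta>"
proof -
  have N: "N > 0" and ne: "\<And>j. j \<in> {1..N} \<Longrightarrow> norm (e j) = 1" using u unfolding untf_def by auto
  have "norm (\<Sum>j\<in>{1..N}. eta \<delta> (x \<bullet> e j) *\<^sub>R e j) \<le> (\<Sum>j\<in>{1..N}. norm (eta \<delta> (x \<bullet> e j) *\<^sub>R e j))"
    by (rule norm_sum)
  also have "\<dots> \<le> (\<Sum>j\<in>{1..N}. \<delta>/2)"
    using ne eta_bound[OF d] by (intro sum_mono) simp
  also have "\<dots> = real N * \<delta> / 2" by simp
  finally have "norm (\<Sum>j\<in>{1..N}. eta \<delta> (x \<bullet> e j) *\<^sub>R e j) \<le> real N * \<delta> / 2" .
  hence "(2 / real N) * norm (\<Sum>j\<in>{1..N}. eta \<delta> (x \<bullet> e j) *\<^sub>R e j) \<le> (2 / real N) * (real N * \<delta> / 2)"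
    using N by (intro mult_left_mono) auto
  thus ?thesis unfolding Ed_alt[OF u] using N by simp
qed

lemma aux_div: "(B::real) = A / r \<Longrightarrow> A \<le> E * r \<Longrightarrow> r > 0 \<Longrightarrow> B \<le> E"
  by (simp add: pos_divide_le_eq)

lemma h_bound:
  assumes u: "untf N e" and r: "norm x = r" "r > 0"
  shows "\<bar>(2 / (real N * r)) * (\<Sum>j\<in>{1..N}. Gf \<delta> (x \<bullet> e j))\<bar> \<le> Ed \<delta> x N e"
proof -
  define w where "w = (2 / real N) *\<^sub>R (\<Sum>j\<in>{1..N}. eta \<delta> (x \<bullet> e j) *\<^sub>R e j)"
  have "w \<bullet> x = (2 / real N) * (\<Sum>j\<in>{1..N}. Gf \<delta> (x \<bullet> e j))"
  proof -
    have "w \<bullet> x = (2 / real N) * (\<Sum>j\<in>{1..N}. eta \<delta> (x \<bullet> e j) * (e j \<bullet> x))"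
      unfolding w_def by (simp add: inner_sum_left)
    thus ?thesis unfolding Gf_def eta_def[symmetric] by (simp add: inner_commute)
  qed
  moreover have "\<bar>w \<bullet> x\<bar> \<le> norm w * norm x" by (rule Cauchy_Schwarz_ineq2)
  moreover have "norm w = Ed \<delta> x N e" unfolding w_def Ed_alt[OF u] ..
  ultimately have Y: "\<bar>(2 / real N) * (\<Sum>j\<in>{1..N}. Gf \<delta> (x \<bullet> e j))\<bar> \<le> Ed \<delta> x N e * r"
    using r(1) by simp
  have N: "N > 0" using u unfolding untf_def by simp
  have "(2 / (real N * r)) * (\<Sum>j\<in>{1..N}. Gf \<delta> (x \<bullet> e j)) = ((2 / real N) * (\<Sum>j\<in>{1..N}. Gf \<delta> (x \<bullet> e j))) / r"
    using N r(2) by (simp add: field_simps)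
  hence "\<bar>(2 / (real N * r)) * (\<Sum>j\<in>{1..N}. Gf \<delta> (x \<bullet> e j))\<bar> = \<bar>(2 / real N) * (\<Sum>j\<in>{1..N}. Gf \<delta> (x \<bullet> e j))\<bar> / r"
    using r(2) by simp
  thus ?thesis using Y r(2) by (rule aux_div)
qed



lemma powr_52: "(x::real) > 0 \<Longrightarrow> x powr (5/2) = x^2 * sqrt x"
proof -
  assume x: "x > 0"
  have e: "(5/2::real) = 2 + 1/2" by simp
  have "x powr (5/2) = x powr 2 * x powr (1/2)" unfolding e by (rule powr_add)
  moreover have "x powr 2 = x^2" using x powr_realpow[of x 2] by simp
  ultimately show ?thesis using x by (simp add: powr_half_sqrt)
qed

lemma powr_32: "(x::real) > 0 \<Longrightarrow> x powr (3/2) = x * sqrt x"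
proof -
  assume x: "x > 0"
  have e: "(3/2::real) = 1 + 1/2" by simp
  have "x powr (3/2) = x powr 1 * x powr (1/2)" unfolding e by (rule powr_add)
  thus ?thesis using x by (simp add: powr_half_sqrt)
qed

lemma final_arith:
  fixes r \<delta> :: real
  assumes r: "r > 0" and d: "\<delta> > 0"
  shows "(2 * r * ((8/(3*pi^2)) * (2/(r/\<delta>)) * sqrt (2/(r/\<delta>)))) / sqrt (2*pi)
       = 32 / (3 * pi powr (5/2)) * \<delta> powr (3/2) / sqrt r"
proof -
  have s1: "sqrt (2/(r/\<delta>)) = sqrt 2 * sqrt \<delta> / sqrt r" using r d
    by (simp add: real_sqrt_divide real_sqrt_mult field_simps)
  have s2: "sqrt (2*pi) = sqrt 2 * sqrt pi" by (simp add: real_sqrt_mult)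
  have pos: "sqrt 2 > 0" "sqrt pi > 0" "sqrt r > 0" "sqrt \<delta> > 0" using r d by auto
  show ?thesis unfolding s1 s2 powr_52[OF pi_gt_zero] powr_32[OF d] using r d pos
    by (simp add: field_simps)
qed



lemma xpsi_inner:
  assumes "e $ 1 = cos \<theta>" "e $ 2 = sin \<theta>"
  shows "xpsi r \<psi> \<bullet> e = r * cos (\<psi> - \<theta>)"
  using assms unfolding xpsi_def by (simp add: inner_vec_def sum_2 cos_diff algebra_simps)

lemma unit_angle:
  fixes e :: "real^2"
  assumes "norm e = 1"
  obtains \<theta> where "0 \<le> \<theta>" "\<theta> < 2*pi" "e $ 1 = cos \<theta>" "e $ 2 = sin \<theta>"
proof -
  have "(e $ 1)^2 + (e $ 2)^2 = 1"
    using power2_norm_eq_inner[of e] assms by (simp add: inner_vec_def sum_2 power2_eq_square)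
  thus ?thesis using sincos_total_2pi that by blast
qed

theorem theorem1p2:
  fixes r \<delta> :: real and N :: nat and e :: "nat \<Rightarrow> real^2"
  assumes "r > 0" and "\<delta> > 0" and "r / \<delta> + 1/2 \<in> \<int>"
    and "untf N e"
  shows "MSE \<delta> r N e \<ge> 32 / (3 * pi powr (5/2)) * \<delta> powr (3/2) / sqrt r"
proof -
  note r = assms(1) and d = assms(2) and u = assms(4)
  have N: "N > 0" and ne: "\<And>j. j \<in> {1..N} \<Longrightarrow> norm (e j) = 1" using u unfolding untf_def by auto
  obtain n :: int where n: "r / \<delta> + 1/2 = of_int n" using assms(3) by (auto elim: Ints_cases)
  have "r / \<delta> > 0" using r d by simp
  hence n1: "n \<ge> 1" using n by linarith
  define k where "k = nat (n - 1)"
  have kr: "real k = r/\<delta> - 1/2" unfolding k_def using n n1 by simp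
  define R where "R = real k + 1/2"
  have R: "R = r / \<delta>" unfolding R_def kr by simp
  have rR: "r = (real k + 1/2) * \<delta>" using R d unfolding R_def by (simp add: field_simps)
  define \<Sigma> where "\<Sigma> = (\<Sum>m=1..k. sqrt(1 - ((real m - 1/2)/(real k + 1/2))^2))"
  define Jv where "Jv = pi * r^2 - 4*\<delta>*r * \<Sigma>"
  have JI: "((\<lambda>\<psi>. Gf \<delta> (r * cos \<psi>)) has_integral Jv) {0..2*pi}"
    unfolding Jv_def \<Sigma>_def using J_formula[OF d rR] .
  have Jj: "((\<lambda>\<psi>. Gf \<delta> (xpsi r \<psi> \<bullet> e j)) has_integral Jv) {0..2*pi}" if j: "j \<in> {1..N}" for j
  proof -
    obtain \<theta> where th: "0 \<le> \<theta>" "\<theta> < 2*pi" "e j $ 1 = cos \<theta>" "e j $ 2 = sin \<theta>"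
      using unit_angle[OF ne[OF j]] by blast
    have "((\<lambda>\<psi>. (\<lambda>x. Gf \<delta> (r * cos x)) (\<psi> - \<theta>)) has_integral Jv) {0..2*pi}"
      by (rule periodic_shift[OF _ JI]) (use th in auto)
    thus ?thesis using xpsi_inner[OF th(3,4)] by simp
  qed
  define h where "h \<psi> = (2 / (real N * r)) * (\<Sum>j\<in>{1..N}. Gf \<delta> (xpsi r \<psi> \<bullet> e j))" for \<psi>
  define I where "I = 2 * Jv / r"
  have hI: "(h has_integral I) {0..2*pi}"
  proof -
    have "(h has_integral ((2 / (real N * r)) * (\<Sum>j\<in>{1..N}. Jv))) {0..2*pi}"
      unfolding h_def by (intro has_integral_mult_right has_integral_sum Jj) auto
    moreover have "(2 / (real N * r)) * (\<Sum>j\<in>{1..N}. Jv) = I" unfolding I_def using N by simp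
    ultimately show ?thesis by simp
  qed
  define E2 where "E2 \<psi> = (Ed \<delta> (xpsi r \<psi>) N e)^2" for \<psi>
  have nx: "norm (xpsi r \<psi>) = r" for \<psi>
  proof -
    have "xpsi r \<psi> \<bullet> xpsi r \<psi> = (r * cos \<psi>)^2 + (r * sin \<psi>)^2"
      unfolding xpsi_def by (simp add: inner_vec_def sum_2 power2_eq_square)
    also have "\<dots> = r^2" by (simp add: power_mult_distrib flip: distrib_left)
    finally have "(norm (xpsi r \<psi>))^2 = r^2" unfolding power2_norm_eq_inner .
    thus ?thesis using r by (simp add: power2_eq_iff_nonneg)
  qed
  have hle: "\<bar>h \<psi>\<bar> \<le> Ed \<delta> (xpsi r \<psi>) N e" for \<psi>
    unfolding h_def by (rule h_bound[OF u nx r])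
  have E2int: "E2 integrable_on {0..2*pi}"
  proof (rule measurable_bounded_by_integrable_imp_integrable_real)
    show "E2 \<in> borel_measurable (lebesgue_on {0..2*pi})" unfolding E2_def by (rule meas_Ed)
    show "(\<lambda>x. \<delta>^2) integrable_on {0..2*pi}" by auto
    show "\<bar>E2 x\<bar> \<le> \<delta>^2" if "x \<in> {0..2*pi}" for x
    proof -
      have "0 \<le> Ed \<delta> (xpsi r x) N e" unfolding Ed_def by simp
      moreover have "Ed \<delta> (xpsi r x) N e \<le> \<delta>" by (rule Ed_bound[OF u d])
      ultimately show ?thesis unfolding E2_def by (simp add: power_mono)
    qed
    show "{0..2*pi} \<in> sets lebesgue" by simp
  qed
  define m where "m = I / (2*pi)"
  have cI: "((\<lambda>\<psi>. m^2) has_integral (2*pi*m^2)) {0..2*pi}"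
    using has_integral_const_real[of "m^2" 0 "2*pi"] by simp
  have low: "((\<lambda>\<psi>. 2*m*h \<psi> - m^2) has_integral (2*m*I - 2*pi*m^2)) {0..2*pi}"
    by (intro has_integral_diff has_integral_mult_right hI cI)
  have pt: "2*m*h \<psi> - m^2 \<le> E2 \<psi>" for \<psi>
  proof -
    have "0 \<le> (h \<psi> - m)^2" by simp
    hence "2*m*h \<psi> - m^2 \<le> (h \<psi>)^2" by (simp add: power2_diff algebra_simps)
    also have "(h \<psi>)^2 \<le> E2 \<psi>" unfolding E2_def using hle[of \<psi>]
      by (metis abs_ge_zero power2_abs power_mono)
    finally show ?thesis .
  qed
  have "2*m*I - 2*pi*m^2 \<le> integral {0..2*pi} E2"
    by (rule has_integral_le[OF low integrable_integral[OF E2int]]) (simp add: pt)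
  moreover have "2*m*I - 2*pi*m^2 = I^2 / (2*pi)"
    unfolding m_def by (simp add: field_simps power2_eq_square)
  ultimately have intlow: "I^2 / (2*pi) \<le> integral {0..2*pi} E2" by simp
  define L where "L = 2 * r * ((8/(3*pi^2)) * (2/(r/\<delta>)) * sqrt (2/(r/\<delta>)))"
  have db: "(8/(3*pi^2)) * (2/R) * sqrt (2/R) \<le> pi - 4/R * (\<Sum>m=1..k. sqrt(1 - ((real m - 1/2)/R)^2))"
    by (rule disc_bound[OF R_def])
  define Sm where "Sm = (\<Sum>m=1..k. sqrt(1 - ((real m - 1/2)/R)^2))"
  have SS: "\<Sigma> = Sm" unfolding \<Sigma>_def Sm_def R_def ..
  have R0: "R > 0" using R r d by simp
  have dR: "\<delta> = r / R" using R r d by simp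
  have Jv2: "Jv = r^2 * (pi - 4/R * (\<Sum>m=1..k. sqrt(1 - ((real m - 1/2)/R)^2)))"
    unfolding Jv_def SS Sm_def[symmetric] dR using R0 by (simp add: field_simps power2_eq_square)
  have "r^2 * ((8/(3*pi^2)) * (2/R) * sqrt (2/R)) \<le> Jv"
    unfolding Jv2 using db by (intro mult_left_mono) auto
  hence LI: "L \<le> I" unfolding L_def I_def R using r by (simp add: field_simps power2_eq_square)
  have L0: "0 \<le> L" unfolding L_def using r d by simp
  have "L^2 \<le> I^2" using LI L0 by (intro power_mono) auto
  hence "L^2 / (2*pi) \<le> I^2 / (2*pi)" by (intro divide_right_mono) auto
  hence "L^2 / (2*pi) \<le> integral {0..2*pi} E2" using intlow by linarith
  hence "sqrt (L^2 / (2*pi)) \<le> MSE \<delta> r N e" unfolding MSE_def E2_def by simp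
  moreover have "sqrt (L^2 / (2*pi)) = L / sqrt (2*pi)" using L0 by (simp add: real_sqrt_divide)
  moreover have "L / sqrt (2*pi) = 32 / (3 * pi powr (5/2)) * \<delta> powr (3/2) / sqrt r"
    unfolding L_def by (rule final_arith[OF r d])
  ultimately show ?thesis by simp
qed


end
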